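(* For every even $n\ge 2$ and every integer $1\le k\le\frac n2$, $$\sum_{j=0}^{k}\frac{q^{(n-1)j-1}-1}{q-1}\binom{n/2}{j}_{q^2}q^{2(k-j)^2-(k-j)}\frac{(q^{n+2-4k+2j};q^2)_{2k-2j}}{(q;q)_{2k-2j}}=\frac{q^{2k^2-k-1}-1}{q-1}\binom{n}{2k}_q$$ as an identity of rational functions in $q$.
   Context: $(x;t)_m=\prod_{j=0}^{m-1}(1-xt^j)$ and $\binom{c}{d}_t=\prod_{j=0}^{d-1}\frac{1-t^{c-j}}{1-t^{j+1}}$. *)

theory Defs
  imports "HOL-Computational_Algebra.Polynomial_Factorial"
begin

definition qpoch :: "'a::field \<Rightarrow> 'a \<Rightarrow> nat \<Rightarrow> 'a" where
  "qpoch x t m = (\<Prod>j<m. 1 - x * t ^ j)"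

definition qbinom :: "nat \<Rightarrow> nat \<Rightarrow> 'a::field \<Rightarrow> 'a" where
  "qbinom c d t = (\<Prod>j<d. (1 - t ^ (c - j)) / (1 - t ^ (j + 1)))"

definition qvar :: "rat poly fract" where
  "qvar = to_fract [:0, 1:]"

end

theory Submission
  imports Defs
begin

definition qf :: "'a::field \<Rightarrow> nat \<Rightarrow> 'a" where
  "qf t n = (\<Prod>i<n. 1 - t ^ Suc i)"

lemma qf_0[simp]: "qf t 0 = 1" by (simp add: qf_def)
lemma qf_Suc: "qf t (Suc n) = qf t n * (1 - t ^ Suc n)" by (simp add: qf_def)

lemma qf_nz: assumes "\<forall>i>0. t ^ i \<noteq> (1::'a::field)" shows "qf t n \<noteq> 0"
  using assms unfolding qf_def by (auto simp: prod_zero_iff)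

lemma qbinom_0[simp]: "qbinom c 0 t = 1" by (simp add: qbinom_def)
lemma qbinom_Suc: "qbinom c (Suc d) t = qbinom c d t * ((1 - t ^ (c - d)) / (1 - t ^ (d + 1)))"
  by (simp add: qbinom_def)

lemma qbinom_gt: assumes "c < d" shows "qbinom c d t = 0"
proof -
  have "c \<in> {..<d}" using assms by auto
  moreover have "(1 - t ^ (c - c)) / (1 - t ^ (c + 1)) = 0" by simp
  ultimately show ?thesis unfolding qbinom_def
    by (metis (no_types, lifting) finite_lessThan prod_zero)
qed

lemma qbinom_fact:
  assumes h: "\<forall>i>0. t ^ i \<noteq> (1::'a::field)" and "d \<le> c"
  shows "qbinom c d t = qf t c / (qf t d * qf t (c - d))"
  using assms(2)
proof (induction d)
  case 0 then show ?case using qf_nz[OF h] by simp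
next
  case (Suc d)
  have IH: "qbinom c d t = qf t c / (qf t d * qf t (c - d))" using Suc by simp
  have e: "c - d = Suc (c - Suc d)" using Suc by simp
  have n1: "1 - t ^ (d+1) \<noteq> 0" using h by auto
  have n2: "1 - t ^ (c - d) \<noteq> 0" using h e by (metis right_minus_eq zero_less_Suc)
  show ?case
  proof -
    have f: "qf t (c - d) = qf t (c - Suc d) * (1 - t ^ (c - d))"
      using e qf_Suc by metis
    have g: "qf t (Suc d) = qf t d * (1 - t ^ (d+1))" using qf_Suc by simp
    have aux: "\<And>a b e x y::'a. b\<noteq>0 \<Longrightarrow> e\<noteq>0 \<Longrightarrow> x\<noteq>0 \<Longrightarrow> y\<noteq>0 \<Longrightarrow>
       a/(b*(e*x)) * (x/y) = a/((b*y)*e)" by (simp add: field_simps)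
    show ?thesis unfolding qbinom_Suc IH f g
      by (rule aux) (use qf_nz[OF h] n1 n2 in auto)
  qed
qed

lemma pascal_aux:
  fixes F S D a b :: "'a::field"
  assumes "S \<noteq> 0" "D \<noteq> 0" "1 - a \<noteq> 0" "1 - b \<noteq> 0"
  shows "F*(1-a*b)/((S*(1-a))*(D*(1-b))) = a * (F/((S*(1-a))*D)) + F/(S*(D*(1-b)))"
    and "F*(1-a*b)/((S*(1-a))*(D*(1-b))) = F/((S*(1-a))*D) + b * (F/(S*(D*(1-b))))"
proof -
  have "a * (F/((S*(1-a))*D)) + F/(S*(D*(1-b))) = (a*F*(1-b) + F*(1-a))/((S*(1-a))*(D*(1-b)))"
    using assms by (simp add: add_divide_distrib)
  also have "a*F*(1-b) + F*(1-a) = F*(1-a*b)" by (simp add: algebra_simps)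
  finally show "F*(1-a*b)/((S*(1-a))*(D*(1-b))) = a * (F/((S*(1-a))*D)) + F/(S*(D*(1-b)))" by simp
  have "F/((S*(1-a))*D) + b * (F/(S*(D*(1-b)))) = (F*(1-b) + b*F*(1-a))/((S*(1-a))*(D*(1-b)))"
    using assms by (simp add: add_divide_distrib)
  also have "F*(1-b) + b*F*(1-a) = F*(1-a*b)" by (simp add: algebra_simps)
  finally show "F*(1-a*b)/((S*(1-a))*(D*(1-b))) = F/((S*(1-a))*D) + b * (F/(S*(D*(1-b))))" by simp
qed

lemma qbinom_pascal:
  fixes p :: "'a::field"
  assumes h: "\<forall>i>0. p ^ i \<noteq> 1"
  shows "qbinom (Suc K) r p = p^r * qbinom K r p + (if r = 0 then 0 else qbinom K (r-1) p)"
    and "qbinom (Suc K) r p = qbinom K r p + (if r = 0 then 0 else p^(Suc K - r) * qbinom K (r-1) p)"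
proof -
  have "qbinom (Suc K) r p = p^r * qbinom K r p + (if r = 0 then 0 else qbinom K (r-1) p)
     \<and> qbinom (Suc K) r p = qbinom K r p + (if r = 0 then 0 else p^(Suc K - r) * qbinom K (r-1) p)"
  proof (cases r)
    case 0 then show ?thesis by simp
  next
    case (Suc s)
    consider "K < s" | "s = K" | "s < K" by linarith
    then show ?thesis
    proof cases
      case 1 then show ?thesis using Suc by (simp add: qbinom_gt)
    next
      case 2
      have "qbinom (Suc K) (Suc K) p = 1" "qbinom K K p = 1"
        using qf_nz[OF h] by (simp_all add: qbinom_fact[OF h])
      then show ?thesis using Suc 2 by (simp add: qbinom_gt)
    next
      case 3
      obtain d where K: "K = s + Suc d" using less_imp_Suc_add[OF 3] by auto
      have e1: "qbinom (Suc K) (Suc s) p = qf p (Suc K) / (qf p (Suc s) * qf p (Suc d))"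
        using qbinom_fact[OF h, of "Suc s" "Suc K"] K by simp
      have e2: "qbinom K (Suc s) p = qf p K / (qf p (Suc s) * qf p d)"
        using qbinom_fact[OF h, of "Suc s" "K"] K by simp
      have e3: "qbinom K s p = qf p K / (qf p s * qf p (Suc d))"
        using qbinom_fact[OF h, of "s" "K"] K by simp
      have pk: "p ^ Suc K = p^Suc s * p^Suc d" unfolding K by (simp only: power_add add_Suc_right add_Suc power_Suc mult_ac)
      have f1: "qf p (Suc K) = qf p K * (1 - p^Suc s * p^Suc d)" using qf_Suc pk by metis
      have n1: "1 - p^Suc s \<noteq> 0" "1 - p ^ Suc d \<noteq> 0" using h by auto
      have sk: "Suc K - Suc s = Suc d" using K by simp
      have fs: "qf p (Suc s) = qf p s * (1 - p^Suc s)" "qf p (Suc d) = qf p d * (1 - p^Suc d)"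
        using qf_Suc by blast+
      show ?thesis unfolding Suc
        apply (simp only: e1 e2 e3 f1 fs sk if_False nat.simps diff_Suc_1)
        using pascal_aux[OF qf_nz[OF h] qf_nz[OF h] n1, of "qf p K"] by blast
    qed
  qed
  then show "qbinom (Suc K) r p = p^r * qbinom K r p + (if r = 0 then 0 else qbinom K (r-1) p)"
    and "qbinom (Suc K) r p = qbinom K r p + (if r = 0 then 0 else p^(Suc K - r) * qbinom K (r-1) p)"
    by auto
qed

lemma sum_qbinom_ext:
  assumes "K \<le> N"
  shows "(\<Sum>r\<le>N. qbinom K r p * f r) = (\<Sum>r\<le>K. qbinom K r p * f r)"
  using assms
proof (induction N rule: dec_induct)
  case base then show ?case by simp
next
  case (step n) then show ?case by (simp add: qbinom_gt)
qed

definition uu :: "'a::field \<Rightarrow> 'a \<Rightarrow> 'a \<Rightarrow> nat \<Rightarrow> 'a" where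
  "uu p B c r = (\<Prod>i<r. p^i*c*(p^i-B)/(1-c*p^i))"

lemma uu_0[simp]: "uu p B c 0 = 1" by (simp add: uu_def)
lemma uu_Suc: "uu p B c (Suc r) = uu p B c r * (p^r*c*(p^r-B)/(1-c*p^r))"
  by (simp add: uu_def)

lemma uu_shift:
  fixes p c B :: "'a::field"
  assumes hc: "\<forall>i. c*p^i \<noteq> 1"
  shows "uu p B (c*p) r = p^r*(1-c)/(1-c*p^r) * uu p B c r"
proof (induction r)
  case 0 then show ?case using hc[rule_format, of 0] by simp
next
  case (Suc r)
  have n1: "1 - c*p^r \<noteq> 0" "1 - c*p^Suc r \<noteq> 0" by (metis hc right_minus_eq)+
  define x where "x = p^r"
  have n2: "1 - c*x \<noteq> 0" "1 - c*(p*x) \<noteq> 0" using n1 unfolding x_def by auto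
  show ?case unfolding uu_Suc Suc.IH
    by (simp add: x_def[symmetric] mult.assoc[symmetric]) (use n2 in \<open>simp add: field_simps\<close>)
qed

lemma uu_step:
  fixes p c B :: "'a::field"
  assumes hc: "\<forall>i. c*p^i \<noteq> 1"
  shows "p^r * uu p B c r + uu p B c (Suc r) = (1-c*B)/(1-c) * uu p B (c*p) r"
proof -
  have n1: "1 - c*p^r \<noteq> 0" "1 - c \<noteq> 0" using hc[rule_format, of r] hc[rule_format, of 0] by auto
  define x where "x = p^r"
  define U where "U = uu p B c r"
  have n2: "1 - c*x \<noteq> 0" using n1 unfolding x_def by auto
  show ?thesis unfolding uu_Suc uu_shift[OF hc]
    by (simp add: x_def[symmetric] U_def[symmetric]) (use n2 n1 in \<open>simp add: field_simps\<close>)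
qed

lemma V1:
  fixes p c B :: "'a::field"
  assumes hp: "\<forall>i>0. p^i \<noteq> 1" and hc: "\<forall>i. c*p^i \<noteq> 1"
  shows "(\<Sum>r\<le>K. qbinom K r p * uu p B c r) = (\<Prod>i<K. (1-c*B*p^i)/(1-c*p^i))"
  using hc
proof (induction K arbitrary: c)
  case 0 then show ?case by simp
next
  case (Suc K c)
  have hc': "\<forall>i. (c*p)*p^i \<noteq> 1" using Suc.prems by (metis mult.assoc power_Suc)
  have "(\<Sum>r\<le>Suc K. qbinom (Suc K) r p * uu p B c r)
      = (\<Sum>r\<le>Suc K. qbinom K r p * (p^r * uu p B c r) + (if r = 0 then 0 else qbinom K (r-1) p) * uu p B c r)"
    by (rule sum.cong) (simp_all only: qbinom_pascal(1)[OF hp] algebra_simps)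
  also have "\<dots> = (\<Sum>r\<le>Suc K. qbinom K r p * (p^r * uu p B c r)) + (\<Sum>r\<le>Suc K. (if r = 0 then 0 else qbinom K (r-1) p) * uu p B c r)"
    by (rule sum.distrib)
  also have "(\<Sum>r\<le>Suc K. qbinom K r p * (p^r * uu p B c r)) = (\<Sum>r\<le>K. qbinom K r p * (p^r * uu p B c r))"
    by (rule sum_qbinom_ext) simp
  also have "(\<Sum>r\<le>Suc K. (if r = 0 then 0 else qbinom K (r-1) p) * uu p B c r) = (\<Sum>r\<le>K. qbinom K r p * uu p B c (Suc r))"
    by (subst sum.atMost_Suc_shift) simp
  also have "(\<Sum>r\<le>K. qbinom K r p * (p^r * uu p B c r)) + (\<Sum>r\<le>K. qbinom K r p * uu p B c (Suc r)) = (\<Sum>r\<le>K. qbinom K r p * ((1-c*B)/(1-c) * uu p B (c*p) r))"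
    by (simp only: sum.distrib[symmetric] distrib_left[symmetric] uu_step[OF Suc.prems])
  also have "\<dots> = (1-c*B)/(1-c) * (\<Sum>r\<le>K. qbinom K r p * uu p B (c*p) r)"
    by (simp add: sum_distrib_left mult_ac)
  also have "\<dots> = (1-c*B)/(1-c) * (\<Prod>i<K. (1-(c*p)*B*p^i)/(1-(c*p)*p^i))" using Suc.IH[OF hc'] by simp
  also have "\<dots> = (\<Prod>i<Suc K. (1-c*B*p^i)/(1-c*p^i))" by (subst prod.lessThan_Suc_shift) (simp add: mult_ac)
  finally show ?case .
qed

definition ww :: "'a::field \<Rightarrow> 'a \<Rightarrow> nat \<Rightarrow> 'a \<Rightarrow> nat \<Rightarrow> 'a" where
  "ww p A K c r = (\<Prod>i<r. (- (p^(Suc i)*(1-A*p^i)))/(p^K*(1-c*p^i)))"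

lemma ww_0[simp]: "ww p A K c 0 = 1" by (simp add: ww_def)
lemma ww_Suc: "ww p A K c (Suc r) = ww p A K c r * ((- (p^(Suc r)*(1-A*p^r)))/(p^K*(1-c*p^r)))"
  by (simp add: ww_def)

lemma ww_K:
  fixes p :: "'a::field"
  assumes "p \<noteq> 0"
  shows "ww p A (Suc K) c r = ww p A K c r / p^r"
proof (induction r)
  case 0 then show ?case by simp
next
  case (Suc r)
  define x where "x = p^r"
  define y where "y = p^K"
  define W where "W = ww p A K c r"
  have "x \<noteq> 0" "y \<noteq> 0" using assms unfolding x_def y_def by auto
  then show ?case unfolding ww_Suc Suc.IH
    by (simp add: x_def[symmetric] y_def[symmetric] W_def[symmetric])
qed

lemma ww_shift:
  fixes p c :: "'a::field"
  assumes hc: "\<forall>i. c*p^i \<noteq> 1"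
  shows "ww p A K (c*p) r = (1-c)/(1-c*p^r) * ww p A K c r"
proof (induction r)
  case 0 then show ?case using hc[rule_format, of 0] by simp
next
  case (Suc r)
  have n1: "1 - c*p^r \<noteq> 0" "1 - c*p^Suc r \<noteq> 0" by (metis hc right_minus_eq)+
  define x where "x = p^r"
  define y where "y = p^K"
  define W where "W = ww p A K c r"
  have n2: "1 - c*x \<noteq> 0" "1 - c*(p*x) \<noteq> 0" using n1 unfolding x_def by auto
  show ?case unfolding ww_Suc Suc.IH
    by (simp add: x_def[symmetric] y_def[symmetric] W_def[symmetric] mult.assoc[symmetric])
qed

lemma ww_step:
  fixes p c A :: "'a::field"
  assumes hc: "\<forall>i. c*p^i \<noteq> 1" and p0: "p \<noteq> 0" and rK: "r \<le> K"
  shows "ww p A (Suc K) c r + p^(K-r) * ww p A (Suc K) c (Suc r) = (A-c)/(1-c) * ww p A K (c*p) r"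
proof -
  obtain d where K: "K = r + d" using rK by (metis le_add_diff_inverse)
  have n1: "1 - c*p^r \<noteq> 0" "1 - c \<noteq> 0" using hc[rule_format, of r] hc[rule_format, of 0] by auto
  define x where "x = p^r"
  define y where "y = p^d"
  define W where "W = ww p A K c r"
  have pk: "p^K = x*y" "p^(K-r) = y" unfolding K x_def y_def by (simp_all add: power_add)
  have n2: "1 - c*x \<noteq> 0" "x \<noteq> 0" "y \<noteq> 0" using n1 p0 unfolding x_def y_def by auto
  have px: "p^r = x" by (simp add: x_def)
  have e1: "ww p A (Suc K) c (Suc r) = W/x * ((-(p*x*(1-A*x)))/(p*(x*y)*(1-c*x)))"
    by (simp only: ww_Suc ww_K[OF p0] W_def[symmetric] power_Suc pk px)
  have e2: "ww p A (Suc K) c r = W/x" by (simp only: ww_K[OF p0] W_def[symmetric] px)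
  have e3: "ww p A K (c*p) r = (1-c)/(1-c*x) * W" by (simp only: ww_shift[OF hc] W_def[symmetric] px)
  have s1: "y*(W/x * ((-(p*x*(1-A*x)))/(p*(x*y)*(1-c*x)))) = -(W*(1-A*x))/(x*(1-c*x))"
    using n2 p0 by (simp add: field_simps)
  have s2: "W/x + -(W*(1-A*x))/(x*(1-c*x)) = W*(A-c)/(1-c*x)"
    using n2 p0 by (simp add: field_simps)
  have s3: "(A-c)/(1-c) * ((1-c)/(1-c*x) * W) = W*(A-c)/(1-c*x)"
    using n1 by simp
  show ?thesis unfolding e1 e2 e3 pk s1 s2 s3 ..
qed

lemma V2:
  fixes p c A :: "'a::field"
  assumes hp: "\<forall>i>0. p^i \<noteq> 1" and hc: "\<forall>i. c*p^i \<noteq> 1" and p0: "p \<noteq> 0"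
  shows "(\<Sum>r\<le>K. qbinom K r p * ww p A K c r) = (\<Prod>i<K. (A-c*p^i)/(1-c*p^i))"
  using hc
proof (induction K arbitrary: c)
  case 0 then show ?case by simp
next
  case (Suc K c)
  have hc': "\<forall>i. (c*p)*p^i \<noteq> 1" using Suc.prems by (metis mult.assoc power_Suc)
  have "(\<Sum>r\<le>Suc K. qbinom (Suc K) r p * ww p A (Suc K) c r)
      = (\<Sum>r\<le>Suc K. qbinom K r p * ww p A (Suc K) c r + (if r = 0 then 0 else p^(Suc K - r) * qbinom K (r-1) p) * ww p A (Suc K) c r)"
    by (rule sum.cong) (simp_all only: qbinom_pascal(2)[OF hp] algebra_simps)
  also have "\<dots> = (\<Sum>r\<le>Suc K. qbinom K r p * ww p A (Suc K) c r) + (\<Sum>r\<le>Suc K. (if r = 0 then 0 else p^(Suc K - r) * qbinom K (r-1) p) * ww p A (Suc K) c r)"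
    by (rule sum.distrib)
  also have "(\<Sum>r\<le>Suc K. qbinom K r p * ww p A (Suc K) c r) = (\<Sum>r\<le>K. qbinom K r p * ww p A (Suc K) c r)"
    by (rule sum_qbinom_ext) simp
  also have "(\<Sum>r\<le>Suc K. (if r = 0 then 0 else p^(Suc K - r) * qbinom K (r-1) p) * ww p A (Suc K) c r) = (\<Sum>r\<le>K. qbinom K r p * (p^(K-r) * ww p A (Suc K) c (Suc r)))"
    by (subst sum.atMost_Suc_shift) (simp add: mult_ac)
  also have "(\<Sum>r\<le>K. qbinom K r p * ww p A (Suc K) c r) + (\<Sum>r\<le>K. qbinom K r p * (p^(K-r) * ww p A (Suc K) c (Suc r))) = (\<Sum>r\<le>K. qbinom K r p * ((A-c)/(1-c) * ww p A K (c*p) r))"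
    by (simp only: sum.distrib[symmetric] distrib_left[symmetric]) (rule sum.cong, simp_all add: ww_step[OF Suc.prems p0])
  also have "\<dots> = (A-c)/(1-c) * (\<Sum>r\<le>K. qbinom K r p * ww p A K (c*p) r)"
    by (simp add: sum_distrib_left mult_ac)
  also have "\<dots> = (A-c)/(1-c) * (\<Prod>i<K. (A-(c*p)*p^i)/(1-(c*p)*p^i))" using Suc.IH[OF hc'] by simp
  also have "\<dots> = (\<Prod>i<Suc K. (A-c*p^i)/(1-c*p^i))" by (subst prod.lessThan_Suc_shift) (simp add: mult_ac)
  finally show ?case .
qed

lemma La:
  fixes p :: "'a::field"
  assumes hp: "\<forall>i>0. p^i \<noteq> 1"
  shows "qpoch (p^Suc s) p d = qf p (s+d) / qf p s"
proof (induction d)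
  case 0 then show ?case using qf_nz[OF hp] by (simp add: qpoch_def)
next
  case (Suc d)
  have "qpoch (p^Suc s) p (Suc d) = qpoch (p^Suc s) p d * (1 - p^Suc (s+d))"
    by (simp add: qpoch_def power_add)
  also have "\<dots> = qf p (s + Suc d) / qf p s" unfolding Suc.IH by (simp add: qf_Suc)
  finally show ?case .
qed

lemma Lb:
  fixes q :: "'a::field"
  shows "qpoch q q (2*r) = (\<Prod>i<r. 1 - q*(q^2)^i) * qf (q^2) r"
proof (induction r)
  case 0 then show ?case by (simp add: qpoch_def)
next
  case (Suc r)
  have "qpoch q q (2*Suc r) = qpoch q q (2*r) * (1 - q*q^(2*r)) * (1 - q*q^(Suc (2*r)))"
    by (simp add: qpoch_def)
  also have "\<dots> = (\<Prod>i<Suc r. 1 - q*(q^2)^i) * qf (q^2) (Suc r)"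
  proof -
    have a: "q^(2*r) = (q^2)^r" by (simp add: power_mult)
    have b0: "q*q^(Suc (2*r)) = q^(2*Suc r)" by simp
    have b: "q*q^(Suc (2*r)) = (q^2)^(Suc r)" unfolding b0 by (simp only: power_mult)
    show ?thesis unfolding Suc.IH qf_Suc a b by (simp add: mult_ac)
  qed
  finally show ?case .
qed

lemma Lc:
  fixes p :: "'a::field"
  assumes hp: "\<forall>i>0. p^i \<noteq> 1" and "r \<le> L"
  shows "(\<Prod>i<r. 1 - p^(L-i)) = qf p L / qf p (L-r)"
  using assms(2)
proof (induction r)
  case 0 then show ?case using qf_nz[OF hp] by simp
next
  case (Suc r)
  have e: "L - r = Suc (L - Suc r)" using Suc by simp
  have f: "qf p (L - r) = qf p (L - Suc r) * (1 - p^(L-r))" using e qf_Suc by metis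
  have n: "1 - p^(L-r) \<noteq> 0" using hp e by (metis right_minus_eq zero_less_Suc)
  show ?case using Suc qf_nz[OF hp] n by (simp add: f)
qed

lemma Ld:
  fixes q :: "'a::field"
  shows "(\<Prod>i<r. (q^2)^i*(q^2)^i*q) = q^(2*r^2-r)"
proof (induction r)
  case 0 then show ?case by simp
next
  case (Suc r)
  have e: "2*(Suc r)^2 - Suc r = (2*r^2 - r) + (4*r+1)" by (simp add: power2_eq_square algebra_simps)
  have f: "(q^2)^r*(q^2)^r*q = q^(4*r+1)"
  proof -
    have "(q^2)^r*(q^2)^r*q = q^(2*r)*q^(2*r)*q^1" by (simp add: power_mult)
    also have "\<dots> = q^(2*r+2*r+1)" by (simp only: power_add)
    also have "2*r+2*r+1 = 4*r+1" by simp
    finally show ?thesis .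
  qed
  show ?case unfolding prod.lessThan_Suc Suc.IH f e power_add ..
qed

lemma Luu:
  fixes q :: "'a::field"
  assumes hp: "\<forall>i>0. (q^2)^i \<noteq> 1" and rL: "r \<le> L"
  shows "uu (q^2) ((q^2)^L) q r = q^(2*r^2-r) * (qf (q^2) L / qf (q^2) (L-r)) / (\<Prod>i<r. 1 - q*(q^2)^i)"
proof -
  define p where "p = q^2"
  have "uu p (p^L) q r = (\<Prod>i<r. (p^i*p^i*q) * (1 - p^(L-i)) / (1 - q*p^i))"
    unfolding uu_def
  proof (rule prod.cong)
    fix i assume "i \<in> {..<r}"
    then have "i \<le> L" using rL by simp
    then have "p^L = p^i * p^(L-i)" by (simp add: power_add[symmetric])
    then show "p^i*q*(p^i-p^L)/(1-q*p^i) = (p^i*p^i*q) * (1 - p^(L-i)) / (1 - q*p^i)"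
      by (simp add: algebra_simps)
  qed simp
  also have "\<dots> = (\<Prod>i<r. p^i*p^i*q) * (\<Prod>i<r. 1 - p^(L-i)) / (\<Prod>i<r. 1 - q*p^i)"
    by (simp add: prod_dividef prod.distrib)
  also have "\<dots> = q^(2*r^2-r) * (qf p L / qf p (L-r)) / (\<Prod>i<r. 1 - q*p^i)"
    unfolding p_def Ld Lc[OF hp rL] ..
  finally show ?thesis unfolding p_def .
qed

lemma Luu0:
  fixes p :: "'a::field"
  assumes "L < r"
  shows "uu p (p^L) c r = 0"
  unfolding uu_def using assms by (auto simp: prod_zero_iff)

lemma T1:
  fixes q :: "'a::field"
  assumes hq: "\<forall>i>0. q^i \<noteq> 1" and q0: "q \<noteq> 0" and n: "n = 2*m" and mk: "m = k + L" and jk: "j \<le> k"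
  shows "qbinom (n div 2) j (q^2) * q^(2*(k-j)^2 - (k-j)) * qpoch (q powi (int n + 2 - 4*int k + 2*int j)) (q^2) (2*k - 2*j) / qpoch q q (2*k-2*j)
     = qbinom m k (q^2) * (qbinom k (k-j) (q^2) * uu (q^2) ((q^2)^L) q (k-j))"
proof -
  define r where "r = k - j"
  define p where "p = q^2"
  have hp: "\<forall>i>0. p^i \<noteq> 1" unfolding p_def using hq by (simp add: power_mult[symmetric])
  have hp2: "\<forall>i>0. (q^2)^i \<noteq> 1" using hp p_def by simp
  have jr: "j = k - r" "2*k-2*j = 2*r" using jk unfolding r_def by auto
  have nd: "n div 2 = m" using n by simp
  define e where "e = int n + 2 - 4*int k + 2*int j"
  have e2: "e = 2*int L + 2 - 2*int r" unfolding e_def n mk r_def using jk by simp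
  show ?thesis
  proof (cases "L < r")
    case True
    define i0 where "i0 = r - L - 1"
    have i0r: "i0 \<in> {..<2*r}" unfolding i0_def using True by simp
    have "q powi e * p^i0 = q powi e * q powi (int (2*i0))"
    proof -
      have "q powi int (2*i0) = q^(2*i0)" by (rule power_int_of_nat)
      also have "\<dots> = p^i0" by (simp add: p_def power_mult)
      finally show ?thesis by simp
    qed
    also have "\<dots> = q powi (e + int (2*i0))" using q0 by (simp add: power_int_add)
    also have "e + int (2*i0) = 0" unfolding e2 i0_def using True by simp
    finally have "1 - q powi e * p^i0 = 0" by simp
    then have "qpoch (q powi e) p (2*r) = 0" unfolding qpoch_def using i0r
      by (metis (no_types, lifting) finite_lessThan prod_zero)
    moreover have "uu p (p^L) q r = 0" using Luu0 True by blast
    ultimately show ?thesis unfolding jr(2) e_def[symmetric] p_def[symmetric] r_def[symmetric] by simp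
  next
    case False
    then have rL: "r \<le> L" by simp
    have ee: "q powi e = p^Suc (L-r)"
    proof -
      have "e = int (2 * Suc (L-r))" unfolding e2 using rL by simp
      then have "q powi e = q^(2 * Suc (L-r))" by (simp only: power_int_of_nat)
      then show ?thesis unfolding p_def by (simp only: power_mult)
    qed
    have A1: "qpoch (q powi e) p (2*r) = qf p (L+r) / qf p (L-r)"
      unfolding ee La[OF hp] using rL by (simp add: p_def add.commute)
    have hc: "\<forall>i. q*p^i \<noteq> 1"
    proof
      fix i
      have "q*p^i = q^Suc(2*i)" by (simp add: p_def power_mult)
      then show "q*p^i \<noteq> 1" using hq by (metis zero_less_Suc)
    qed
    define D where "D = (\<Prod>i<r. 1 - q*p^i)"
    have Dnz: "D \<noteq> 0" unfolding D_def using hc by (auto simp: prod_zero_iff)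
    have A2: "qpoch q q (2*r) = D * qf p r" unfolding D_def p_def by (rule Lb)
    have A3: "uu p (p^L) q r = q^(2*r^2-r) * (qf p L / qf p (L-r)) / D"
      unfolding D_def p_def by (rule Luu[OF hp2 rL])
    have B1: "qbinom m j p = qf p m / (qf p j * qf p (L+r))"
    proof -
      have "m - j = L + r" unfolding mk r_def using jk by simp
      moreover have "j \<le> m" unfolding mk using jk by simp
      ultimately show ?thesis using qbinom_fact[OF hp, of j m] by simp
    qed
    have B2: "qbinom m k p = qf p m / (qf p k * qf p L)"
      using qbinom_fact[OF hp, of k m] unfolding mk by simp
    have B3: "qbinom k r p = qf p k / (qf p r * qf p j)"
      using qbinom_fact[OF hp, of r k] jk unfolding r_def by simp
    have nz: "qf p a \<noteq> 0" for a using qf_nz[OF hp] .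
    show ?thesis unfolding jr(2) e_def[symmetric] p_def[symmetric] r_def[symmetric] nd
      unfolding A1 A2 A3 B1 B2 B3 using nz Dnz by (simp add: field_simps)
  qed
qed

lemma prod_even_odd: "(\<Prod>i<2*k. f i) = (\<Prod>i<k. f (2*i) * f (Suc (2*i)))"
  by (induction k) (simp_all add: mult_ac)

lemma QB:
  fixes q :: "'a::field"
  assumes km: "m = k + L"
  shows "qbinom (2*m) (2*k) q = qbinom m k (q^2) * (\<Prod>i<k. (1 - q*(q^2)^L*(q^2)^i)/(1-q*(q^2)^i))"
proof -
  define p where "p = q^2"
  have "qbinom (2*m) (2*k) q = (\<Prod>i<k. ((1-p^(m-i))/(1-p^(i+1))) * ((1-q^(2*m-Suc (2*i)))/(1-q*p^i)))"
    unfolding qbinom_def prod_even_odd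
  proof (rule prod.cong)
    fix i assume i: "i \<in> {..<k}"
    have a: "q^(2*m - 2*i) = p^(m-i)" unfolding p_def by (simp add: power_mult[symmetric] diff_mult_distrib2)
    have b: "q^(2*i+1) = q*p^i" unfolding p_def by (simp add: power_mult[symmetric])
    have c0: "Suc (2*i) + 1 = 2*(i+1)" by simp
    have c: "q^(Suc (2*i) + 1) = p^(i+1)" unfolding p_def c0 by (simp only: power_mult)
    show "(1 - q ^ (2*m - 2*i)) / (1 - q ^ (2*i + 1)) * ((1 - q ^ (2*m - Suc (2*i))) / (1 - q ^ (Suc (2*i) + 1)))
        = ((1-p^(m-i))/(1-p^(i+1))) * ((1-q^(2*m-Suc (2*i)))/(1-q*p^i))"
      unfolding a b c by (simp add: field_simps)
  qed simp
  also have "\<dots> = qbinom m k p * ((\<Prod>i<k. 1-q^(2*m-Suc (2*i))) / (\<Prod>i<k. 1-q*p^i))"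
    by (simp add: prod.distrib qbinom_def prod_dividef)
  also have "(\<Prod>i<k. 1-q^(2*m-Suc (2*i))) = (\<Prod>i<k. 1 - q*p^L*p^i)"
  proof -
    have "(\<Prod>i<k. 1-q^(2*m-Suc (2*i))) = (\<Prod>i<k. 1 - q*p^L*p^(k - Suc i))"
    proof (rule prod.cong)
      fix i assume "i \<in> {..<k}"
      then have "2*m - Suc (2*i) = Suc (2*L + 2*(k - Suc i))" unfolding km by simp
      then have "q^(2*m-Suc (2*i)) = q*p^L*p^(k - Suc i)"
        unfolding p_def by (simp add: power_add power_mult[symmetric])
      then show "1-q^(2*m-Suc (2*i)) = 1 - q*p^L*p^(k - Suc i)" by simp
    qed simp
    also have "\<dots> = (\<Prod>i<k. 1 - q*p^L*p^i)" by (rule prod.nat_diff_reindex)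
    finally show ?thesis .
  qed
  finally show ?thesis unfolding p_def by (simp add: prod_dividef)
qed

lemma WU:
  fixes q :: "'a::field"
  assumes q0: "q \<noteq> 0" and nn: "n = 2*(k+L)" and k1: "1 \<le> k"
  shows "ww (q^2) (1/(q^2)^L) k q r * q^((n-1)*r) = uu (q^2) ((q^2)^L) q r"
proof (induction r)
  case 0 then show ?case by simp
next
  case (Suc r)
  define p where "p = q^2"
  define x where "x = p^r"
  define P where "P = p^L"
  define Kp where "Kp = p^k"
  have sn: "Suc (n-1) = n" using nn k1 by simp
  have "q * q^(n-1) = q^n" using sn by (metis power_Suc)
  also have "\<dots> = Kp * P" unfolding nn Kp_def P_def p_def by (simp add: power_mult power_add)
  finally have Qeq: "q^(n-1) = Kp*P/q" using q0 by (simp add: field_simps)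
  have nz: "P \<noteq> 0" "Kp \<noteq> 0" "p \<noteq> 0" using q0 unfolding P_def Kp_def p_def by auto
  have pq: "p = q*q" unfolding p_def by (simp add: power2_eq_square)
  have fac: "(-(p^Suc r*(1-(1/P)*p^r)))/(Kp*(1-q*p^r)) * q^(n-1) = p^r*q*(p^r-P)/(1-q*p^r)"
  proof (cases "1 - q*x = 0")
    case True then show ?thesis unfolding x_def by simp
  next
    case False
    show ?thesis unfolding Qeq power_Suc x_def[symmetric] using nz False q0
      by (simp add: field_simps pq)
  qed
  have "ww p (1/P) k q (Suc r) * q^((n-1)*Suc r)
      = (ww p (1/P) k q r * q^((n-1)*r)) * ((-(p^Suc r*(1-(1/P)*p^r)))/(Kp*(1-q*p^r)) * q^(n-1))"
    unfolding ww_Suc Kp_def by (simp add: power_add mult_ac)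
  also have "\<dots> = uu p P q (Suc r)"
    unfolding fac using Suc.IH unfolding p_def P_def uu_Suc by simp
  finally show ?case unfolding p_def P_def .
qed

lemma sum_rev_k:
  fixes f :: "nat \<Rightarrow> 'a::comm_monoid_add" and k :: nat
  shows "(\<Sum>j=0..k. f j) = (\<Sum>r\<le>k. f (k - r))"
proof -
  have "(\<Sum>r\<le>k. f (k - r)) = (\<Sum>r<Suc k. f (Suc k - Suc r))" by (simp add: lessThan_Suc_atMost)
  also have "\<dots> = (\<Sum>r<Suc k. f r)" by (rule sum.nat_diff_reindex)
  also have "\<dots> = (\<Sum>j=0..k. f j)" by (simp add: lessThan_Suc_atMost atLeast0AtMost)
  finally show ?thesis by simp
qed

lemma main_gen:
  fixes q :: "'a::field" and n k :: nat
  assumes hq: "\<forall>i>0. q^i \<noteq> 1" and q0: "q \<noteq> 0"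
    and ev: "even n" and n2: "n \<ge> 2" and k1: "1 \<le> k" and kn: "k \<le> n div 2"
  shows "(\<Sum>j=0..k.
            (q powi (int ((n - 1) * j) - 1) - 1) / (q - 1)
          * qbinom (n div 2) j (q ^ 2)
          * q ^ (2 * (k - j) ^ 2 - (k - j))
          * qpoch (q powi (int n + 2 - 4 * int k + 2 * int j)) (q ^ 2) (2 * k - 2 * j)
          / qpoch q q (2 * k - 2 * j))
       = (q powi (2 * int k ^ 2 - int k - 1) - 1) / (q - 1) * qbinom n (2 * k) q"
proof -
  define m where "m = n div 2"
  define L where "L = m - k"
  define p where "p = q^2"
  have nm: "n = 2*m" using ev m_def by simp
  have mk: "m = k + L" using kn L_def m_def by simp
  have nn: "n = 2*(k+L)" using nm mk by simp
  have hp: "\<forall>i>0. p^i \<noteq> 1" unfolding p_def using hq by (simp add: power_mult[symmetric])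
  have hc: "\<forall>i. q*p^i \<noteq> 1"
  proof
    fix i
    have "q*p^i = q^Suc(2*i)" by (simp add: p_def power_mult)
    then show "q*p^i \<noteq> 1" using hq by (metis zero_less_Suc)
  qed
  have p0: "p \<noteq> 0" using q0 p_def by simp
  have p1: "q powi 1 = q" using power_int_of_nat[of q 1] by simp
  have q1: "q - 1 \<noteq> 0" using hq by (metis one_neq_zero power_one_right right_minus_eq zero_less_one)
  define T where "T j = qbinom (n div 2) j (q^2) * q^(2*(k-j)^2-(k-j))
      * qpoch (q powi (int n + 2 - 4*int k + 2*int j)) (q^2) (2*k-2*j) / qpoch q q (2*k-2*j)" for j
  define C where "C = qbinom n (2*k) q"
  define X where "X = (\<Prod>i<k. (1 - q*p^L*p^i)/(1-q*p^i))"
  have TT: "T (k - r) = qbinom m k p * (qbinom k r p * uu p (p^L) q r)" if "r \<le> k" for r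
    using T1[OF hq q0 nm mk, of "k - r"] that unfolding T_def p_def by simp
  have CC: "C = qbinom m k p * X" using QB[OF mk, of q] nm unfolding C_def p_def X_def by simp
  have S1: "(\<Sum>j=0..k. T j) = C"
  proof -
    have "(\<Sum>j=0..k. T j) = (\<Sum>r\<le>k. qbinom m k p * (qbinom k r p * uu p (p^L) q r))"
      unfolding sum_rev_k[of T] by (rule sum.cong) (simp_all add: TT)
    also have "\<dots> = qbinom m k p * (\<Sum>r\<le>k. qbinom k r p * uu p (p^L) q r)"
      by (simp add: sum_distrib_left)
    also have "\<dots> = qbinom m k p * X" unfolding V1[OF hp hc] X_def ..
    finally show ?thesis using CC by simp
  qed
  have ex: "(n-1)*k = (2*k^2-k) + 2*L*k" using k1 unfolding nn
    by (simp add: algebra_simps power2_eq_square diff_mult_distrib)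
  have S2: "(\<Sum>j=0..k. q^((n-1)*j) * T j) = q^(2*k^2-k) * C"
  proof -
    have "(\<Sum>j=0..k. q^((n-1)*j) * T j) = (\<Sum>r\<le>k. q^((n-1)*k) * qbinom m k p * (qbinom k r p * ww p (1/p^L) k q r))"
      unfolding sum_rev_k[of "\<lambda>j. q^((n-1)*j) * T j"]
    proof (rule sum.cong)
      fix r assume "r \<in> {..k}"
      then have rk: "r \<le> k" by simp
      have e: "q^((n-1)*(k-r)) * q^((n-1)*r) = q^((n-1)*k)"
      proof -
        have "(n-1)*(k-r) + (n-1)*r = (n-1)*k" using rk by (metis add_mult_distrib2 le_add_diff_inverse2)
        then show ?thesis by (metis power_add)
      qed
      show "q^((n-1)*(k-r)) * T (k-r) = q^((n-1)*k) * qbinom m k p * (qbinom k r p * ww p (1/p^L) k q r)"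
        unfolding TT[OF rk] WU[OF q0 nn k1, of r, symmetric, folded p_def] e[symmetric]
        by (simp add: mult_ac)
    qed simp
    also have "\<dots> = q^((n-1)*k) * qbinom m k p * (\<Sum>r\<le>k. qbinom k r p * ww p (1/p^L) k q r)"
      by (simp add: sum_distrib_left)
    also have "\<dots> = q^((n-1)*k) * qbinom m k p * (\<Prod>i<k. (1/p^L - q*p^i)/(1-q*p^i))"
      unfolding V2[OF hp hc p0] ..
    also have "(\<Prod>i<k. (1/p^L - q*p^i)/(1-q*p^i)) = (\<Prod>i<k. ((1-q*p^L*p^i)/(1-q*p^i)) * (1/p^L))"
      using p0 by (intro prod.cong) (simp_all add: field_simps)
    also have "\<dots> = X * (1/p^L)^k" unfolding X_def prod.distrib prod_constant card_lessThan ..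
    also have "q^((n-1)*k) * qbinom m k p * (X * (1/p^L)^k) = q^(2*k^2-k) * C"
      unfolding CC ex p_def using q0 by (simp add: power_add power_mult[symmetric] field_simps)
    finally show ?thesis .
  qed
  have xt: "(x/q - 1)/(q-1) * t = x*t/(q*(q-1)) - t/(q-1)" for x t
  proof -
    have "x/q - 1 = (x-q)/q" using q0 by (simp add: field_simps)
    then have "(x/q - 1)/(q-1) * t = (x-q)*t/(q*(q-1))" by simp
    also have "\<dots> = x*t/(q*(q-1)) - q*t/(q*(q-1))" by (simp add: diff_divide_distrib left_diff_distrib)
    also have "q*t/(q*(q-1)) = t/(q-1)" using q0 by simp
    finally show ?thesis .
  qed
  have summand: "(q powi (int ((n - 1) * j) - 1) - 1) / (q - 1)
          * qbinom (n div 2) j (q ^ 2)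
          * q ^ (2 * (k - j) ^ 2 - (k - j))
          * qpoch (q powi (int n + 2 - 4 * int k + 2 * int j)) (q ^ 2) (2 * k - 2 * j)
          / qpoch q q (2 * k - 2 * j) = (q^((n-1)*j) * T j) / (q*(q-1)) - T j / (q-1)" for j
  proof -
    have "q powi (int ((n - 1) * j) - 1) = q powi (int ((n - 1) * j)) / q powi 1"
      using q0 by (rule power_int_diff[OF disjI1])
    then have "q powi (int ((n - 1) * j) - 1) = q^((n-1)*j) / q"
      by (simp only: power_int_of_nat p1)
    moreover note xt
    moreover have "(q powi (int ((n - 1) * j) - 1) - 1) / (q - 1)
          * qbinom (n div 2) j (q ^ 2)
          * q ^ (2 * (k - j) ^ 2 - (k - j))
          * qpoch (q powi (int n + 2 - 4 * int k + 2 * int j)) (q ^ 2) (2 * k - 2 * j)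
          / qpoch q q (2 * k - 2 * j) = (q powi (int ((n - 1) * j) - 1) - 1) / (q - 1) * T j"
      unfolding T_def by (simp only: mult.assoc times_divide_eq_right)
    ultimately show ?thesis by simp
  qed
  have rhs: "q powi (2 * int k ^ 2 - int k - 1) = q^(2*k^2-k) / q"
  proof -
    have "2 * int k ^ 2 - int k = int (2*k^2-k)" using k1 by (simp add: of_nat_diff power2_eq_square)
    then have "q powi (2 * int k ^ 2 - int k - 1) = q powi (int (2*k^2-k) - 1)" by simp
    also have "\<dots> = q powi int (2*k^2-k) / q powi 1"
      using q0 by (rule power_int_diff[OF disjI1])
    finally have "q powi (2 * int k ^ 2 - int k - 1) = q powi int (2*k^2-k) / q powi 1" .
    then show ?thesis by (simp only: power_int_of_nat p1)
  qed
  have "(\<Sum>j=0..k. (q^((n-1)*j) * T j) / (q*(q-1)) - T j / (q-1))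
      = (\<Sum>j=0..k. q^((n-1)*j) * T j) / (q*(q-1)) - (\<Sum>j=0..k. T j) / (q-1)"
    by (simp only: sum_subtractf sum_divide_distrib)
  also have "\<dots> = (q^(2*k^2-k)/q - 1)/(q-1) * C" unfolding S1 S2 xt ..
  finally show ?thesis unfolding summand rhs C_def .
qed

lemma qvar_pow: "qvar ^ i = to_fract ([:0,1:]^i)"
proof (induction i)
  case 0 then show ?case by simp
next
  case (Suc i)
  have "qvar ^ Suc i = qvar * qvar ^ i" by simp
  also have "\<dots> = to_fract [:0,1:] * to_fract ([:0,1:]^i)" by (simp only: Suc.IH) (simp only: qvar_def)
  also have "\<dots> = to_fract ([:0,1:] * [:0,1:]^i)" by (rule to_fract_mult[symmetric])
  finally show ?case by (simp only: power_Suc)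
qed

lemma qvar_props: "\<forall>i>0. qvar ^ i \<noteq> 1" "qvar \<noteq> 0"
proof -
  show "\<forall>i>0. qvar ^ i \<noteq> 1"
  proof (intro allI impI)
    fix i :: nat assume "0 < i"
    then have "([:0,1:]::rat poly)^i \<noteq> 1"
      using degree_linear_power[of "0::rat" i] by (metis degree_1 less_numeral_extra(3))
    then show "qvar ^ i \<noteq> 1" unfolding qvar_pow
      by (metis to_fract_1 to_fract_eq_iff)
  qed
  show "qvar \<noteq> 0" unfolding qvar_def by simp
qed

theorem mainTheorem10:
  fixes n k :: nat
  assumes "even n" and "n \<ge> 2" and "1 \<le> k" and "k \<le> n div 2"
  shows "(\<Sum>j=0..k.
            (qvar powi (int ((n - 1) * j) - 1) - 1) / (qvar - 1)
          * qbinom (n div 2) j (qvar ^ 2)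
          * qvar ^ (2 * (k - j) ^ 2 - (k - j))
          * qpoch (qvar powi (int n + 2 - 4 * int k + 2 * int j)) (qvar ^ 2) (2 * k - 2 * j)
          / qpoch qvar qvar (2 * k - 2 * j))
       = (qvar powi (2 * int k ^ 2 - int k - 1) - 1) / (qvar - 1) * qbinom n (2 * k) qvar"
  by (rule main_gen[OF qvar_props assms])

end
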